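(* Consider the queue rule with budget $B$, winner endowments $w$ and ranking scores $r$. Fix a winner $i$ whose score is unique, i.e. $r_i\ne r_j$ for all $j\ne i$. Suppose winner $i$ is split into subaccounts with endowments $z_1,\dots,z_m>0$, $\sum_{a=1}^mz_a=w_i$, each child keeping the parent's score $r_i$, while all other winners are unchanged. Let $x_i(B)$ be the seizure from $i$ in the unsplit instance, and $\tilde x_a(B)$ the seizure from child $a$ in the split instance. Then \[\sum_{a=1}^m\tilde x_a(B)=x_i(B),\] i.e. the queue rule is Sybil resistant for such splits.
   Context: Winners $j$ have haircutable endowments $w_j>0$ and ranking scores $r_j\in\mathbb{R}$. The (wealth-space) queue rule with budget $B\ge0$ works as follows: - It processes winners in decreasing order of score. - Each processed winner $j$ has $x_j=\min\{w_j,\text{remaining budget}\}$ seized. - The seized amount is then subtracted from the remaining budget, which starts at $B$. - Ties in score may be processed in any order. *)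

theory Defs
  imports Complex_Main
begin

definition queue_order :: "'a set \<Rightarrow> ('a \<Rightarrow> real) \<Rightarrow> 'a list \<Rightarrow> bool" where
  "queue_order W r xs \<longleftrightarrow> distinct xs \<and> set xs = W \<and> sorted_wrt (\<lambda>a b. r b \<le> r a) xs"

fun queue_seizure :: "('a \<Rightarrow> real) \<Rightarrow> real \<Rightarrow> 'a list \<Rightarrow> 'a \<Rightarrow> real" where
  "queue_seizure w B [] = (\<lambda>_. 0)"
| "queue_seizure w B (j # xs) =
     (let x = min (w j) B in (queue_seizure w (B - x) xs)(j := x))"

text \<open>Split instance: winners are Inl j (j an unchanged original winner) and Inr a (child a).\<close>
definition split_endow :: "('a \<Rightarrow> real) \<Rightarrow> (nat \<Rightarrow> real) \<Rightarrow> 'a + nat \<Rightarrow> real" where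
  "split_endow w z = case_sum w z"

definition split_score :: "('a \<Rightarrow> real) \<Rightarrow> 'a \<Rightarrow> 'a + nat \<Rightarrow> real" where
  "split_score r i = case_sum r (\<lambda>_. r i)"

end

theory Submission
  imports Defs
begin

fun rem :: "('a \<Rightarrow> real) \<Rightarrow> real \<Rightarrow> 'a list \<Rightarrow> real" where
  "rem w B [] = B"
| "rem w B (j # xs) = rem w (B - min (w j) B) xs"

lemma qs_notin: "j \<notin> set l \<Longrightarrow> queue_seizure w B l j = 0"
  by (induction l arbitrary: B) (auto simp: Let_def)

lemma qs_append: "queue_seizure w B (l1 @ l2) j =
   (if j \<in> set l1 then queue_seizure w B l1 j else queue_seizure w (rem w B l1) l2 j)"
  by (induction l1 arbitrary: B) (auto simp: Let_def)

lemma rem_formula: "B \<ge> 0 \<Longrightarrow> \<forall>j\<in>set l. w j \<ge> 0 \<Longrightarrow>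
   rem w B l = max 0 (B - sum_list (map w l))"
proof (induction l arbitrary: B)
  case Nil thus ?case by simp
next
  case (Cons j xs)
  have "sum_list (map w xs) \<ge> 0" using Cons.prems by (intro sum_list_nonneg) auto
  moreover have "rem w (B - min (w j) B) xs = max 0 (B - min (w j) B - sum_list (map w xs))"
    using Cons by auto
  ultimately show ?case by auto
qed

lemma sum_qs: "B \<ge> 0 \<Longrightarrow> distinct l \<Longrightarrow> \<forall>j\<in>set l. w j \<ge> 0 \<Longrightarrow>
   (\<Sum>j\<in>set l. queue_seizure w B l j) = min (sum_list (map w l)) B"
proof (induction l arbitrary: B)
  case Nil thus ?case by simp
next
  case (Cons j xs)
  let ?B = "B - min (w j) B"
  have S: "sum_list (map w xs) \<ge> 0" using Cons.prems by (intro sum_list_nonneg) auto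
  have "(\<Sum>k\<in>set (j#xs). queue_seizure w B (j#xs) k)
      = min (w j) B + (\<Sum>k\<in>set xs. queue_seizure w ?B xs k)"
    using Cons.prems by (simp add: Let_def sum.insert_remove) (intro sum.cong, auto)
  also have "(\<Sum>k\<in>set xs. queue_seizure w ?B xs k) = min (sum_list (map w xs)) ?B"
    using Cons by auto
  finally show ?case using S by auto
qed

lemma sorted_split:
  assumes "sorted_wrt (\<lambda>a b. s b \<le> s a) l" "distinct l"
    and up: "\<And>a b. P b \<Longrightarrow> s b \<le> s a \<Longrightarrow> P a"
  shows "set (takeWhile P l) = {e\<in>set l. P e}" "set (dropWhile P l) = {e\<in>set l. \<not> P e}"
proof -
  have l: "l = takeWhile P l @ dropWhile P l" by simp
  have sd: "sorted_wrt (\<lambda>a b. s b \<le> s a) (dropWhile P l)"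
    using assms(1) l by (metis sorted_wrt_append)
  have nd: "\<not> P e" if "e \<in> set (dropWhile P l)" for e
  proof (cases "dropWhile P l")
    case Nil thus ?thesis using that by (metis empty_iff list.set(1))
  next
    case (Cons d ds)
    have "\<not> P d" using Cons by (metis dropWhile_eq_Cons_conv)
    thus ?thesis using that sd Cons up by auto
  qed
  have dis: "set (takeWhile P l) \<inter> set (dropWhile P l) = {}"
    using assms(2) l by (metis distinct_append)
  have un: "set l = set (takeWhile P l) \<union> set (dropWhile P l)" using l by (metis set_append)
  have tw: "\<And>e. e \<in> set (takeWhile P l) \<Longrightarrow> P e" by (meson set_takeWhileD)
  show "set (takeWhile P l) = {e\<in>set l. P e}" using un tw nd by blast
  show "set (dropWhile P l) = {e\<in>set l. \<not> P e}" using un tw nd by blast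
qed

lemma sum_list_set: "distinct l \<Longrightarrow> sum_list (map f l) = sum f (set l)"
  by (simp add: sum_list_distinct_conv_sum_set)

theorem mainTheorem5:
  fixes W :: "'a set" and w r :: "'a \<Rightarrow> real" and B :: real and i :: 'a
    and m :: nat and z :: "nat \<Rightarrow> real"
    and xs :: "'a list" and ys :: "('a + nat) list"
  assumes "finite W"
    and "\<forall>j\<in>W. w j > 0"
    and "B \<ge> 0"
    and "i \<in> W"
    and "\<forall>j\<in>W. j \<noteq> i \<longrightarrow> r j \<noteq> r i"
    and "\<forall>a<m. z a > 0"
    and "(\<Sum>a<m. z a) = w i"
    and "queue_order W r xs"
    and "queue_order (Inl ` (W - {i}) \<union> Inr ` {..<m}) (split_score r i) ys"
  shows "(\<Sum>a<m. queue_seizure (split_endow w z) B ys (Inr a)) = queue_seizure w B xs i"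
proof -
  let ?V = "Inl ` (W - {i}) \<union> Inr ` {..<m}"
  let ?s = "split_score r i"
  let ?f = "split_endow w z"
  define A where "A = {j\<in>W. r i < r j}"
  have xo: "distinct xs" "set xs = W" "sorted_wrt (\<lambda>a b. r b \<le> r a) xs"
    using assms(8) unfolding queue_order_def by auto
  have yo: "distinct ys" "set ys = ?V" "sorted_wrt (\<lambda>a b. ?s b \<le> ?s a) ys"
    using assms(9) unfolding queue_order_def by auto
  have fnn: "\<forall>e\<in>?V. ?f e \<ge> 0" using assms(2,6) by (auto simp: split_endow_def less_imp_le)
  define T where "T = takeWhile (\<lambda>j. r i < r j) xs"
  define D where "D = dropWhile (\<lambda>j. r i < r j) xs"
  have xsTD: "xs = T @ D" unfolding T_def D_def by simp
  have sT: "set T = A" "set D = {j\<in>W. \<not> r i < r j}"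
    using sorted_split[OF xo(3) xo(1), of "\<lambda>j. r i < r j"] xo(2) unfolding T_def D_def A_def
    by auto
  have iD: "i \<in> set D" using sT assms(4) by auto
  then obtain d ds where Dc: "D = d # ds" by (cases D) auto
  have sdD: "sorted_wrt (\<lambda>a b. r b \<le> r a) D" using xo(3) xsTD by (metis sorted_wrt_append)
  have "d = i"
  proof (rule ccontr)
    assume "d \<noteq> i"
    hence "i \<in> set ds" using iD Dc by auto
    hence "r i \<le> r d" using sdD Dc by auto
    moreover have "d \<in> W" "\<not> r i < r d" using sT Dc by auto
    ultimately show False using assms(5) \<open>d \<noteq> i\<close> by force
  qed
  have wnn: "\<forall>j\<in>set T. w j \<ge> 0" using sT assms(2) A_def by (auto simp: less_imp_le)
  have dT: "distinct T" using xo(1) xsTD by (metis distinct_append)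
  have RHS: "queue_seizure w B xs i = min (w i) (max 0 (B - sum w A))"
  proof -
    have "sum_list (map w T) = sum w A" using sum_list_set[OF dT, of w] sT by simp
    moreover have "i \<notin> set T" using sT unfolding A_def by simp
    moreover have "queue_seizure w B xs i = queue_seizure w (rem w B T) (i # ds) i"
      using qs_append[of w B T "i # ds" i] calculation(2) unfolding xsTD Dc \<open>d = i\<close> by argo
    ultimately show ?thesis using rem_formula[OF assms(3) wnn] by (simp add: Let_def)
  qed
  define T' where "T' = takeWhile (\<lambda>e. r i < ?s e) ys"
  define D' where "D' = dropWhile (\<lambda>e. r i < ?s e) ys"
  have ysTD: "ys = T' @ D'" unfolding T'_def D'_def by simp
  have sT': "set T' = {e\<in>?V. r i < ?s e}" "set D' = {e\<in>?V. \<not> r i < ?s e}"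
    using sorted_split[OF yo(3) yo(1), of "\<lambda>e. r i < ?s e"] yo(2) unfolding T'_def D'_def
    by auto
  have sT'A: "set T' = Inl ` A" unfolding sT' A_def
    by (auto simp: split_score_def)
  have dT': "distinct T'" "distinct D'" using yo(1) ysTD by (metis distinct_append)+
  have sdD': "sorted_wrt (\<lambda>a b. ?s b \<le> ?s a) D'" using yo(3) ysTD by (metis sorted_wrt_append)
  define C where "C = takeWhile (\<lambda>e. r i \<le> ?s e) D'"
  define E where "E = dropWhile (\<lambda>e. r i \<le> ?s e) D'"
  have DCE: "D' = C @ E" unfolding C_def E_def by simp
  have sC0: "set C = {e\<in>set D'. r i \<le> ?s e}"
    using sorted_split[OF sdD' dT'(2), of "\<lambda>e. r i \<le> ?s e"] unfolding C_def by auto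
  have sC: "set C = Inr ` {..<m}"
  proof -
    have 1: "set C = {e\<in>?V. ?s e = r i}"
    proof (rule set_eqI)
      fix e show "e \<in> set C \<longleftrightarrow> e \<in> {e\<in>?V. ?s e = r i}"
        unfolding sC0 sT'(2) mem_Collect_eq by linarith
    qed
    have 2: "{e\<in>?V. ?s e = r i} = Inr ` {..<m}"
    proof (rule set_eqI)
      fix e show "e \<in> {e\<in>?V. ?s e = r i} \<longleftrightarrow> e \<in> Inr ` {..<m}"
      proof (cases e)
        case (Inl j) thus ?thesis using assms(5) by (auto simp: split_score_def)
      next
        case (Inr a) thus ?thesis by (auto simp: split_score_def)
      qed
    qed
    show ?thesis using 1 2 by simp
  qed
  have dC: "distinct C" using dT'(2) DCE by (metis distinct_append)
  have fT': "\<forall>e\<in>set T'. ?f e \<ge> 0" "\<forall>e\<in>set C. ?f e \<ge> 0" using fnn sT'(1) sC by auto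
  have remT': "rem ?f B T' = max 0 (B - sum w A)"
  proof -
    have "sum_list (map ?f T') = sum ?f (Inl ` A)" using sum_list_set[OF dT'(1)] sT'A by simp
    also have "\<dots> = sum w A" by (simp add: sum.reindex split_endow_def)
    finally show ?thesis using rem_formula[OF assms(3) fT'(1)] by simp
  qed
  have sumC: "sum_list (map ?f C) = w i"
  proof -
    have "sum_list (map ?f C) = sum ?f (Inr ` {..<m})" using sum_list_set[OF dC] sC by simp
    also have "\<dots> = (\<Sum>a<m. z a)" by (simp add: sum.reindex split_endow_def)
    finally show ?thesis using assms(7) by simp
  qed
  have R0: "rem ?f B T' \<ge> 0" using remT' by simp
  have "(\<Sum>a<m. queue_seizure ?f B ys (Inr a)) = (\<Sum>a<m. queue_seizure ?f (rem ?f B T') C (Inr a))"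
  proof (rule sum.cong)
    fix a assume "a \<in> {..<m}"
    hence "Inr a \<in> set C" "Inr a \<notin> set T'" using sC sT'A by auto
    thus "queue_seizure ?f B ys (Inr a) = queue_seizure ?f (rem ?f B T') C (Inr a)"
      using ysTD DCE by (simp add: qs_append)
  qed simp
  also have "\<dots> = (\<Sum>e\<in>set C. queue_seizure ?f (rem ?f B T') C e)"
    unfolding sC by (simp add: sum.reindex)
  also have "\<dots> = min (w i) (rem ?f B T')" using sum_qs[OF R0 dC fT'(2)] sumC by simp
  finally show ?thesis using RHS remT' by simp
qed

end
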